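(* Assume the setting described in the context, assume that $\mu$ is absolutely continuous with respect to $\lambda$, and let $\theta\in\mathbb{R}^{\mathfrak{d}}$ satisfy $$\mathcal{L}(\theta)\Big(\sum_{i=1}^H|\mathfrak{v}^\theta_i|\,\mathbb{1}_{\{0\}}\Big(|\mathfrak{b}^\theta_i|+\sum_{j=1}^d|\mathfrak{w}^\theta_{i,j}|\Big)\Big)=0.$$ Then $\mathcal{L}$ is differentiable at $\theta$ and $(\nabla\mathcal{L})(\theta)=\mathcal{G}(\theta)$.
   Context: Setting: $d,H,\mathfrak{d}\in\mathbb{N}$ with $\mathfrak{d}=dH+2H+1$, $\mathscr{a}\in\mathbb{R}$, $\mathscr{b}\in(\mathscr{a},\infty)$, $f\in C([\mathscr{a},\mathscr{b}]^d,\mathbb{R})$. For $\theta=(\theta_1,\dots,\theta_{\mathfrak{d}})\in\mathbb{R}^{\mathfrak{d}}$, $i\in\{1,\dots,H\}$, $j\in\{1,\dots,d\}$ put $\mathfrak{w}^\theta_{i,j}=\theta_{(i-1)d+j}$, $\mathfrak{b}^\theta_i=\theta_{Hd+i}$, $\mathfrak{v}^\theta_i=\theta_{H(d+1)+i}$, $\mathfrak{c}^\theta=\theta_{\mathfrak{d}}$. Let $\mathfrak{R}_r\in C^1(\mathbb{R},\mathbb{R})$, $r\in\mathbb{N}$, satisfy for all $x\in\mathbb{R}$ that $\lim_{r\to\infty}\big(|\mathfrak{R}_r(x)-\max\{x,0\}|+|(\mathfrak{R}_r)'(x)-\mathbb{1}_{(0,\infty)}(x)|\big)=0$ and $\sup_{r\in\mathbb{N}}\sup_{y\in[-|x|,|x|]}|(\mathfrak{R}_r)'(y)|<\infty$.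 Let $\mu$ be a finite measure on $\mathcal{B}([\mathscr{a},\mathscr{b}]^d)$ and $\lambda$ the Lebesgue–Borel measure on $[\mathscr{a},\mathscr{b}]^d$. For $\theta\in\mathbb{R}^{\mathfrak{d}}$, $x\in\mathbb{R}^d$ let $\mathscr{N}^\theta(x)=\mathfrak{c}^\theta+\sum_{i=1}^H\mathfrak{v}^\theta_i\max\{\mathfrak{b}^\theta_i+\sum_{j=1}^d\mathfrak{w}^\theta_{i,j}x_j,0\}$, $\mathcal{L}(\theta)=\int_{[\mathscr{a},\mathscr{b}]^d}(f(y)-\mathscr{N}^\theta(y))^2\,\mu(\mathrm{d}y)$, and for $r\in\mathbb{N}$, $\mathfrak{L}_r(\theta)=\int_{[\mathscr{a},\mathscr{b}]^d}\big(f(y)-\mathfrak{c}^\theta-\sum_{i=1}^H\mathfrak{v}^\theta_i\,\mathfrak{R}_r(\mathfrak{b}^\theta_i+\sum_{j=1}^d\mathfrak{w}^\theta_{i,j}y_j)\big)^2\,\mu(\mathrm{d}y)$. Let $\mathcal{G}=(\mathcal{G}_1,\dots,\mathcal{G}_{\mathfrak{d}})\colon\mathbb{R}^{\mathfrak{d}}\to\mathbb{R}^{\mathfrak{d}}$ satisfy $\mathcal{G}(\theta)=\lim_{r\to\infty}(\nabla\mathfrak{L}_r)(\theta)$ for every $\theta$ for which this limit exists. $\mathbb{1}_A$ is the indicator function of $A$. *)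

theory Defs
  imports "HOL-Analysis.Analysis"
begin

text \<open>Parameter vectors live in real^'p with CARD('p) = d*H+2*H+1; the paper's
  coordinate theta_k (k = 1..dim) is theta $ ep k for a fixed bijection ep from
  {1..dim} onto 'p. Inputs live in real^'d with d = CARD('d); the paper's x_j
  (j = 1..d) is x $ ej j for a fixed bijection ej from {1..d} onto 'd.\<close>

definition wP :: "(nat \<Rightarrow> 'p) \<Rightarrow> nat \<Rightarrow> real^'p \<Rightarrow> nat \<Rightarrow> nat \<Rightarrow> real" where
  "wP ep d \<theta> i j = \<theta> $ ep ((i - 1) * d + j)"

definition bP :: "(nat \<Rightarrow> 'p) \<Rightarrow> nat \<Rightarrow> nat \<Rightarrow> real^'p \<Rightarrow> nat \<Rightarrow> real" where
  "bP ep d H \<theta> i = \<theta> $ ep (H * d + i)"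

definition vP :: "(nat \<Rightarrow> 'p) \<Rightarrow> nat \<Rightarrow> nat \<Rightarrow> real^'p \<Rightarrow> nat \<Rightarrow> real" where
  "vP ep d H \<theta> i = \<theta> $ ep (H * (d + 1) + i)"

definition cP :: "(nat \<Rightarrow> 'p) \<Rightarrow> nat \<Rightarrow> nat \<Rightarrow> real^'p \<Rightarrow> real" where
  "cP ep d H \<theta> = \<theta> $ ep (d * H + 2 * H + 1)"

definition netA :: "(real \<Rightarrow> real) \<Rightarrow> (nat \<Rightarrow> 'p) \<Rightarrow> (nat \<Rightarrow> 'd) \<Rightarrow> nat
    \<Rightarrow> real^'p \<Rightarrow> real^'d \<Rightarrow> real" where
  "netA act ep ej H \<theta> x =
     cP ep CARD('d) H \<theta> + (\<Sum>i = 1..H. vP ep CARD('d) H \<theta> i *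
        act (bP ep CARD('d) H \<theta> i + (\<Sum>j = 1..CARD('d). wP ep CARD('d) \<theta> i j * x $ ej j)))"

definition realNN :: "(nat \<Rightarrow> 'p) \<Rightarrow> (nat \<Rightarrow> 'd) \<Rightarrow> nat \<Rightarrow> real^'p \<Rightarrow> real^'d \<Rightarrow> real" where
  "realNN ep ej H \<theta> x = netA (\<lambda>t. max t 0) ep ej H \<theta> x"

definition cube :: "real \<Rightarrow> real \<Rightarrow> (real^'d) set" where
  "cube a b = cbox (\<chi> _. a) (\<chi> _. b)"

definition riskA :: "(real \<Rightarrow> real) \<Rightarrow> (nat \<Rightarrow> 'p) \<Rightarrow> (nat \<Rightarrow> 'd) \<Rightarrow> nat
    \<Rightarrow> (real^'d \<Rightarrow> real) \<Rightarrow> (real^'d) measure \<Rightarrow> real^'p \<Rightarrow> real" where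
  "riskA act ep ej H f \<mu> \<theta> = (\<integral>y. (f y - netA act ep ej H \<theta> y)^2 \<partial>\<mu>)"

end

theory Submission
  imports Defs
begin

lemma int_has_derivative:
  fixes \<Phi> :: "'a::euclidean_space \<Rightarrow> 'b \<Rightarrow> real" and M :: "'b measure"
    and D :: "'b \<Rightarrow> 'a \<Rightarrow> real"
  assumes fin: "finite_measure M"
    and meas: "\<And>t. \<Phi> t \<in> borel_measurable M"
    and Dmeas: "\<And>h. (\<lambda>y. D y h) \<in> borel_measurable M"
    and Dadd: "\<And>y h1 h2. y \<in> space M \<Longrightarrow> D y (h1 + h2) = D y h1 + D y h2"
    and Dscale: "\<And>y c h. y \<in> space M \<Longrightarrow> D y (c *\<^sub>R h) = c * D y h"
    and Dbd: "\<And>y h. y \<in> space M \<Longrightarrow> \<bar>D y h\<bar> \<le> B * norm h"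
    and \<delta>: "\<delta> > 0"
    and lip: "\<And>t y. t \<in> ball x \<delta> \<Longrightarrow> y \<in> space M \<Longrightarrow> \<bar>\<Phi> t y - \<Phi> x y\<bar> \<le> K * norm (t - x)"
    and bdx: "\<And>y. y \<in> space M \<Longrightarrow> \<bar>\<Phi> x y\<bar> \<le> C"
    and der: "AE y in M. ((\<lambda>t. \<Phi> t y) has_derivative D y) (at x)"
  shows "((\<lambda>t. \<integral>y. \<Phi> t y \<partial>M) has_derivative (\<lambda>h. \<integral>y. D y h \<partial>M)) (at x)"
proof -
  interpret finite_measure M by fact
  have intD: "integrable M (\<lambda>y. D y h)" for h
    by (rule integrable_const_bound[where B="B * norm h"]) (auto simp: Dbd Dmeas)
  have intP: "integrable M (\<Phi> t)" if "t \<in> ball x \<delta>" for t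
  proof (rule integrable_const_bound[where B="C + K * norm (t - x)"])
    show "AE y in M. norm (\<Phi> t y) \<le> C + K * norm (t - x)"
      using lip[OF that] bdx by (intro AE_I2) (smt (verit) real_norm_def)
  qed (rule meas)
  have bl: "bounded_linear (\<lambda>h. \<integral>y. D y h \<partial>M)"
  proof (rule bounded_linear_intro[where K="measure M (space M) * B"])
    fix h1 h2
    have "(\<integral>y. D y (h1 + h2) \<partial>M) = (\<integral>y. D y h1 + D y h2 \<partial>M)"
      by (rule Bochner_Integration.integral_cong) (auto simp: Dadd)
    also have "\<dots> = (\<integral>y. D y h1 \<partial>M) + (\<integral>y. D y h2 \<partial>M)"
      using intD by simp
    finally show "(\<integral>y. D y (h1 + h2) \<partial>M) = (\<integral>y. D y h1 \<partial>M) + (\<integral>y. D y h2 \<partial>M)" .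
  next
    fix c h
    have "(\<integral>y. D y (c *\<^sub>R h) \<partial>M) = (\<integral>y. c * D y h \<partial>M)"
      by (rule Bochner_Integration.integral_cong) (auto simp: Dscale)
    then show "(\<integral>y. D y (c *\<^sub>R h) \<partial>M) = c *\<^sub>R (\<integral>y. D y h \<partial>M)" by simp
  next
    fix h
    have "norm (\<integral>y. D y h \<partial>M) \<le> B * norm h * measure M (space M)"
    proof -
      have "norm (\<integral>y. D y h \<partial>M) \<le> (\<integral>y. norm (D y h) \<partial>M)" by (rule integral_norm_bound)
      also have "\<dots> \<le> (\<integral>y. B * norm h \<partial>M)"
        by (rule integral_mono) (auto simp: Dbd intD)
      finally show ?thesis by (simp add: mult_ac)
    qed
    then show "norm (\<integral>y. D y h \<partial>M) \<le> norm h * (measure M (space M) * B)"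
      by (simp add: algebra_simps)
  qed
  show ?thesis
    unfolding has_derivative_iff_norm
  proof (intro conjI bl)
    show "((\<lambda>t. norm ((\<integral>y. \<Phi> t y \<partial>M) - (\<integral>y. \<Phi> x y \<partial>M) - (\<integral>y. D y (t - x) \<partial>M)) / norm (t - x)) \<longlongrightarrow> 0) (at x)"
      unfolding tendsto_at_iff_sequentially
    proof (intro allI impI)
      fix X :: "nat \<Rightarrow> 'a"
      assume Xne: "\<forall>i. X i \<in> UNIV - {x}" and Xl: "X \<longlonglongrightarrow> x"
      from Xl \<delta> obtain N where N: "\<And>n. n \<ge> N \<Longrightarrow> dist (X n) x < \<delta>"
        unfolding lim_sequentially by blast
      define Q where "Q i y = (\<Phi> (X i) y - \<Phi> x y - D y (X i - x)) / norm (X i - x)" for i y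
      have Xn0: "norm (X i - x) > 0" for i using Xne by auto
      have inball: "X (n + N) \<in> ball x \<delta>" for n using N[of "n+N"] by (simp add: dist_commute)
      have eq: "norm ((\<integral>y. \<Phi> (X (n+N)) y \<partial>M) - (\<integral>y. \<Phi> x y \<partial>M) - (\<integral>y. D y (X (n+N) - x) \<partial>M)) / norm (X (n+N) - x)
             = norm (\<integral>y. Q (n+N) y \<partial>M)" for n
      proof -
        have "(\<integral>y. Q (n+N) y \<partial>M) = (\<integral>y. \<Phi> (X (n+N)) y - \<Phi> x y - D y (X (n+N) - x) \<partial>M) / norm (X (n+N) - x)"
          unfolding Q_def by simp
        also have "(\<integral>y. \<Phi> (X (n+N)) y - \<Phi> x y - D y (X (n+N) - x) \<partial>M)
            = (\<integral>y. \<Phi> (X (n+N)) y \<partial>M) - (\<integral>y. \<Phi> x y \<partial>M) - (\<integral>y. D y (X (n+N) - x) \<partial>M)"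
          using intP[OF inball] intP[of x] \<delta> intD by simp
        finally show ?thesis using Xn0[of "n+N"] by simp
      qed
      have "(\<lambda>n. \<integral>y. Q (n+N) y \<partial>M) \<longlonglongrightarrow> (\<integral>y. 0 \<partial>M)"
      proof (rule integral_dominated_convergence[where w="\<lambda>_. K + B"])
        show "(\<lambda>y. 0) \<in> borel_measurable M" by simp
        show "Q (n+N) \<in> borel_measurable M" for n unfolding Q_def using meas Dmeas by measurable
        show "integrable M (\<lambda>_. K + B)" by simp
        show "AE y in M. norm (Q (n + N) y) \<le> K + B" for n
        proof (intro AE_I2)
          fix y assume y: "y \<in> space M"
          have "\<bar>\<Phi> (X (n+N)) y - \<Phi> x y - D y (X (n+N) - x)\<bar> \<le> K * norm (X (n+N) - x) + B * norm (X (n+N) - x)"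
            using lip[OF inball[of n] y] Dbd[OF y, of "X (n+N) - x"] by linarith
          then have "\<bar>\<Phi> (X (n+N)) y - \<Phi> x y - D y (X (n+N) - x)\<bar> \<le> (K + B) * norm (X (n+N) - x)"
            by (simp add: distrib_right)
          then show "norm (Q (n + N) y) \<le> K + B"
            unfolding Q_def real_norm_def abs_divide abs_norm_cancel
            using Xn0[of "n+N"] by (simp add: pos_divide_le_eq)
        qed
        show "AE y in M. (\<lambda>n. Q (n + N) y) \<longlonglongrightarrow> 0"
          using der
        proof eventually_elim
          fix y assume "((\<lambda>t. \<Phi> t y) has_derivative D y) (at x)"
          then have "((\<lambda>t. norm ((\<Phi> t y - \<Phi> x y) - D y (t - x)) / norm (t - x)) \<longlongrightarrow> 0) (at x)"
            unfolding has_derivative_iff_norm by blast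
          then have "((\<lambda>t. norm ((\<Phi> t y - \<Phi> x y) - D y (t - x)) / norm (t - x)) \<circ> X) \<longlonglongrightarrow> 0"
            unfolding tendsto_at_iff_sequentially using Xne Xl by blast
          then have "(\<lambda>n. \<bar>Q n y\<bar>) \<longlonglongrightarrow> 0" unfolding Q_def o_def by (simp add: abs_divide)
          then have "(\<lambda>n. Q n y) \<longlonglongrightarrow> 0" by (rule tendsto_rabs_zero_cancel)
          then show "(\<lambda>n. Q (n + N) y) \<longlonglongrightarrow> 0" by (rule LIMSEQ_ignore_initial_segment[where k=N, simplified])
        qed
      qed
      then have h0: "(\<lambda>n. \<integral>y. Q (n+N) y \<partial>M) \<longlonglongrightarrow> 0" by simp
      have "(\<lambda>n. norm (\<integral>y. Q (n+N) y \<partial>M)) \<longlonglongrightarrow> 0"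
        using tendsto_norm[OF h0] by simp
      then have "(\<lambda>n. ((\<lambda>t. norm ((\<integral>y. \<Phi> t y \<partial>M) - (\<integral>y. \<Phi> x y \<partial>M) - (\<integral>y. D y (t - x) \<partial>M)) / norm (t - x)) \<circ> X) (n + N)) \<longlonglongrightarrow> 0"
        unfolding comp_def eq .
      then show "((\<lambda>t. norm ((\<integral>y. \<Phi> t y \<partial>M) - (\<integral>y. \<Phi> x y \<partial>M) - (\<integral>y. D y (t - x) \<partial>M)) / norm (t - x)) \<circ> X) \<longlonglongrightarrow> 0"
        by (rule LIMSEQ_offset)
    qed
  qed
qed

definition zz :: "(nat \<Rightarrow> 'p::finite) \<Rightarrow> (nat \<Rightarrow> 'd::finite) \<Rightarrow> nat \<Rightarrow> real^'p \<Rightarrow> nat \<Rightarrow> real^'d \<Rightarrow> real" where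
  "zz ep ej H \<theta> i y = bP ep CARD('d) H \<theta> i + (\<Sum>j = 1..CARD('d). wP ep CARD('d) \<theta> i j * y $ ej j)"

definition DN :: "(real \<Rightarrow> real) \<Rightarrow> (real \<Rightarrow> real) \<Rightarrow> (nat \<Rightarrow> 'p::finite) \<Rightarrow> (nat \<Rightarrow> 'd::finite) \<Rightarrow> nat
   \<Rightarrow> real^'p \<Rightarrow> real^'d \<Rightarrow> real^'p \<Rightarrow> real" where
  "DN act act' ep ej H \<theta> y h = cP ep CARD('d) H h + (\<Sum>i = 1..H.
      vP ep CARD('d) H h i * act (zz ep ej H \<theta> i y) + vP ep CARD('d) H \<theta> i * act' (zz ep ej H \<theta> i y) * zz ep ej H h i y)"

lemma netA_zz: "netA act ep ej H \<theta> y = cP ep CARD('d) H \<theta> + (\<Sum>i = 1..H. vP ep CARD('d) H \<theta> i * act (zz ep ej H \<theta> i y))"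
  for ej :: "nat \<Rightarrow> 'd::finite"
  unfolding netA_def zz_def ..

lemma lin_simps:
  "cP ep n H (x + y) = cP ep n H x + cP ep n H y"
  "cP ep n H (x - y) = cP ep n H x - cP ep n H y"
  "cP ep n H (c *\<^sub>R x) = c * cP ep n H x"
  "vP ep n H (x + y) i = vP ep n H x i + vP ep n H y i"
  "vP ep n H (x - y) i = vP ep n H x i - vP ep n H y i"
  "vP ep n H (c *\<^sub>R x) i = c * vP ep n H x i"
  "bP ep n H (x + y) i = bP ep n H x i + bP ep n H y i"
  "bP ep n H (x - y) i = bP ep n H x i - bP ep n H y i"
  "bP ep n H (c *\<^sub>R x) i = c * bP ep n H x i"
  "wP ep n (x + y) i j = wP ep n x i j + wP ep n y i j"
  "wP ep n (x - y) i j = wP ep n x i j - wP ep n y i j"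
  "wP ep n (c *\<^sub>R x) i j = c * wP ep n x i j"
  by (simp_all add: cP_def vP_def bP_def wP_def)

lemma zz_simps:
  "zz ep ej H (x + y) i z = zz ep ej H x i z + zz ep ej H y i z"
  "zz ep ej H (x - y) i z = zz ep ej H x i z - zz ep ej H y i z"
  "zz ep ej H (c *\<^sub>R x) i z = c * zz ep ej H x i z"
  by (simp_all add: zz_def lin_simps algebra_simps sum.distrib sum_subtractf sum_distrib_left)

lemma proj_bd:
  "\<bar>cP ep n H h\<bar> \<le> norm h" "\<bar>vP ep n H h i\<bar> \<le> norm h" "\<bar>bP ep n H h i\<bar> \<le> norm h" "\<bar>wP ep n h i j\<bar> \<le> norm h"
  by (simp_all add: cP_def vP_def bP_def wP_def component_le_norm_cart)

lemma bl_proj: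
  "bounded_linear (\<lambda>t. cP ep n H t)" "bounded_linear (\<lambda>t. vP ep n H t i)"
  "bounded_linear (\<lambda>t. zz ep ej H t i y)"
proof -
  show "bounded_linear (\<lambda>t. cP ep n H t)" unfolding cP_def by (rule bounded_linear_vec_nth)
  show "bounded_linear (\<lambda>t. vP ep n H t i)" unfolding vP_def by (rule bounded_linear_vec_nth)
  show "bounded_linear (\<lambda>t. zz ep ej H t i y)" unfolding zz_def bP_def wP_def
    by (intro bounded_linear_add bounded_linear_sum bounded_linear_compose[OF bounded_linear_mult_left] bounded_linear_vec_nth)
qed

lemma zz_bd:
  fixes ej :: "nat \<Rightarrow> 'd::finite"
  assumes "\<And>k. \<bar>y $ k\<bar> \<le> Y"
  shows "\<bar>zz ep ej H h i y\<bar> \<le> norm h * (1 + real CARD('d) * Y)"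
proof -
  have "\<bar>zz ep ej H h i y\<bar> \<le> \<bar>bP ep CARD('d) H h i\<bar> + (\<Sum>j = 1..CARD('d). \<bar>wP ep CARD('d) h i j * y $ ej j\<bar>)"
    unfolding zz_def by (rule order_trans[OF abs_triangle_ineq add_left_mono[OF sum_abs]])
  also have "\<dots> \<le> norm h + (\<Sum>j = 1..CARD('d). norm h * Y)"
    by (intro add_mono sum_mono proj_bd) (simp add: abs_mult mult_mono' proj_bd assms)
  also have "\<dots> = norm h * (1 + real CARD('d) * Y)" by (simp add: algebra_simps)
  finally show ?thesis .
qed

lemma has_derivative_proj:
  "((\<lambda>t. cP ep n H t) has_derivative (\<lambda>t. cP ep n H t)) F"
  "((\<lambda>t. vP ep n H t i) has_derivative (\<lambda>t. vP ep n H t i)) F"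
  "((\<lambda>t. zz ep ej H t i y) has_derivative (\<lambda>t. zz ep ej H t i y)) F"
  by (simp_all add: bounded_linear_imp_has_derivative bl_proj)

lemma deriv_zero_factor:
  fixes u :: "'a::real_normed_vector \<Rightarrow> real"
  assumes u: "bounded_linear u" and u0: "u x = 0" and m: "isCont m x"
  shows "((\<lambda>t. u t * m t) has_derivative (\<lambda>h. u h * m x)) (at x)"
  unfolding has_derivative_at
proof
  show "bounded_linear (\<lambda>h. u h * m x)" using u by (rule bounded_linear_compose[OF bounded_linear_mult_left])
  obtain Ku where Ku: "\<And>h. norm (u h) \<le> norm h * Ku" "Ku > 0"
    using bounded_linear.pos_bounded[OF u] by blast
  have ux: "u (x + h) = u h" for h using u u0 by (simp add: linear_add bounded_linear.linear)
  have mc: "(\<lambda>h. m (x + h)) \<midarrow>0\<rightarrow> m x" using m by (simp add: isCont_iff)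
  show "(\<lambda>h. norm (u (x + h) * m (x + h) - u x * m x - u h * m x) / norm h) \<midarrow>0\<rightarrow> 0"
  proof (rule Lim_null_comparison)
    show "\<forall>\<^sub>F h in at 0. norm (norm (u (x + h) * m (x + h) - u x * m x - u h * m x) / norm h) \<le> Ku * \<bar>m (x + h) - m x\<bar>"
    proof (intro always_eventually allI)
      fix h :: 'a
      have "norm (u (x + h) * m (x + h) - u x * m x - u h * m x) = \<bar>u h\<bar> * \<bar>m (x + h) - m x\<bar>"
        unfolding ux u0 by (simp add: abs_mult[symmetric] algebra_simps)
      also have "\<dots> \<le> norm h * Ku * \<bar>m (x + h) - m x\<bar>"
        using Ku(1)[of h] by (intro mult_right_mono) auto
      finally show "norm (norm (u (x + h) * m (x + h) - u x * m x - u h * m x) / norm h) \<le> Ku * \<bar>m (x + h) - m x\<bar>"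
        by (cases "h = 0") (auto simp: divide_le_eq algebra_simps)
    qed
    have "(\<lambda>h. Ku * \<bar>m (x + h) - m x\<bar>) \<midarrow>0\<rightarrow> Ku * \<bar>m x - m x\<bar>"
      by (intro tendsto_intros mc)
    then show "(\<lambda>h. Ku * \<bar>m (x + h) - m x\<bar>) \<midarrow>0\<rightarrow> 0" by simp
  qed
qed

lemma deriv_quad_zero:
  fixes F :: "'a::real_normed_vector \<Rightarrow> real"
  assumes d: "\<delta> > 0" and b: "\<And>t. t \<in> ball x \<delta> \<Longrightarrow> \<bar>F t\<bar> \<le> K * (norm (t - x))\<^sup>2"
  shows "(F has_derivative (\<lambda>h. 0)) (at x)"
  unfolding has_derivative_at
proof
  show "bounded_linear (\<lambda>h::'a. 0::real)" by simp
  have F0: "F x = 0" using b[of x] d by simp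
  show "(\<lambda>h. norm (F (x + h) - F x - 0) / norm h) \<midarrow>0\<rightarrow> 0"
  proof (rule Lim_null_comparison)
    show "\<forall>\<^sub>F h in at 0. norm (norm (F (x + h) - F x - 0) / norm h) \<le> K * norm h"
      unfolding eventually_at
    proof (intro exI[of _ \<delta>] conjI d ballI impI)
      fix h :: 'a assume "h \<in> UNIV" and h: "h \<noteq> 0 \<and> dist h 0 < \<delta>"
      then have "\<bar>F (x + h)\<bar> \<le> K * (norm h)\<^sup>2" using b[of "x + h"] by (simp add: dist_norm)
      then show "norm (norm (F (x + h) - F x - 0) / norm h) \<le> K * norm h"
        using h by (simp add: F0 divide_le_eq power2_eq_square mult.assoc)
    qed
    have "(\<lambda>h::'a. norm h) \<midarrow>0\<rightarrow> 0" using tendsto_norm[OF tendsto_ident_at[of "0::'a" UNIV]] by simp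
    then have "(\<lambda>h::'a. K * norm h) \<midarrow>0\<rightarrow> K * 0" by (rule tendsto_mult[OF tendsto_const])
    then show "(\<lambda>h::'a. K * norm h) \<midarrow>0\<rightarrow> 0" by simp
  qed
qed

lemma net_bounds:
  fixes ej :: "nat \<Rightarrow> 'd::finite" and ep :: "nat \<Rightarrow> 'p::finite"
  assumes act_lip: "\<And>s u. \<bar>s\<bar> \<le> M \<Longrightarrow> \<bar>u\<bar> \<le> M \<Longrightarrow> \<bar>act s - act u\<bar> \<le> C * \<bar>s - u\<bar>"
    and act_bd: "\<And>s. \<bar>s\<bar> \<le> M \<Longrightarrow> \<bar>act s\<bar> \<le> A"
    and C0: "C \<ge> 0" and A0: "A \<ge> 0"
    and y: "\<And>k. \<bar>y $ k\<bar> \<le> Y"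
    and t: "norm (t - \<theta>) < 1"
    and M: "M = (norm \<theta> + 1) * (1 + real CARD('d) * Y)"
  shows "\<bar>netA act ep ej H t y - netA act ep ej H \<theta> y\<bar>
           \<le> (1 + real H * (A + norm \<theta> * C * (1 + real CARD('d) * Y))) * norm (t - \<theta>)"
    and "\<bar>netA act ep ej H t y\<bar> \<le> (norm \<theta> + 1) * (1 + real H * A)"
proof -
  define Z where "Z = 1 + real CARD('d) * Y"
  have Y0: "Y \<ge> 0" using y[of undefined] by linarith
  have Z0: "Z \<ge> 0" using Y0 unfolding Z_def by simp
  have nt: "norm t \<le> norm \<theta> + 1"
    using t norm_triangle_ineq[of "t - \<theta>" \<theta>] by simp
  have zt: "\<bar>zz ep ej H t i y\<bar> \<le> M" for i
  proof -
    have "norm t * Z \<le> (norm \<theta> + 1) * Z" by (rule mult_right_mono[OF nt Z0])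
    then show ?thesis
      using zz_bd[OF y, where ej=ej and ep=ep and H=H and h=t and i=i] unfolding M Z_def[symmetric] by linarith
  qed
  have z\<theta>: "\<bar>zz ep ej H \<theta> i y\<bar> \<le> M" for i
  proof -
    have "norm \<theta> * Z \<le> (norm \<theta> + 1) * Z" by (rule mult_right_mono) (simp_all add: Z0)
    then show ?thesis
      using zz_bd[OF y, where ej=ej and ep=ep and H=H and h=\<theta> and i=i] unfolding M Z_def[symmetric] by linarith
  qed
  have trm: "\<bar>vP ep CARD('d) H t i * act (zz ep ej H t i y) - vP ep CARD('d) H \<theta> i * act (zz ep ej H \<theta> i y)\<bar>
      \<le> (A + norm \<theta> * C * Z) * norm (t - \<theta>)" for i
  proof -
    have eq: "vP ep CARD('d) H t i * act (zz ep ej H t i y) - vP ep CARD('d) H \<theta> i * act (zz ep ej H \<theta> i y)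
       = vP ep CARD('d) H (t - \<theta>) i * act (zz ep ej H t i y) + vP ep CARD('d) H \<theta> i * (act (zz ep ej H t i y) - act (zz ep ej H \<theta> i y))"
      by (simp add: lin_simps algebra_simps)
    have 1: "\<bar>vP ep CARD('d) H (t - \<theta>) i * act (zz ep ej H t i y)\<bar> \<le> norm (t - \<theta>) * A"
      unfolding abs_mult by (intro mult_mono proj_bd act_bd zt) auto
    have "\<bar>act (zz ep ej H t i y) - act (zz ep ej H \<theta> i y)\<bar> \<le> C * \<bar>zz ep ej H (t - \<theta>) i y\<bar>"
      using act_lip[OF zt z\<theta>] by (simp add: zz_simps)
    also have "\<dots> \<le> C * (norm (t - \<theta>) * Z)"
      using zz_bd[OF y, where ej=ej and ep=ep and H=H and h="t - \<theta>" and i=i] C0 unfolding Z_def by (intro mult_left_mono) auto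
    finally have 2: "\<bar>vP ep CARD('d) H \<theta> i * (act (zz ep ej H t i y) - act (zz ep ej H \<theta> i y))\<bar> \<le> norm \<theta> * (C * (norm (t - \<theta>) * Z))"
      unfolding abs_mult by (intro mult_mono proj_bd) auto
    have "\<bar>vP ep CARD('d) H (t - \<theta>) i * act (zz ep ej H t i y) + vP ep CARD('d) H \<theta> i * (act (zz ep ej H t i y) - act (zz ep ej H \<theta> i y))\<bar>
       \<le> \<bar>vP ep CARD('d) H (t - \<theta>) i * act (zz ep ej H t i y)\<bar> + \<bar>vP ep CARD('d) H \<theta> i * (act (zz ep ej H t i y) - act (zz ep ej H \<theta> i y))\<bar>"
      by (rule abs_triangle_ineq)
    also have "\<dots> \<le> norm (t - \<theta>) * A + norm \<theta> * (C * (norm (t - \<theta>) * Z))" using 1 2 by (rule add_mono)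
    also have "\<dots> = (A + norm \<theta> * C * Z) * norm (t - \<theta>)" by (simp add: algebra_simps)
    finally show ?thesis unfolding eq .
  qed
  have "netA act ep ej H t y - netA act ep ej H \<theta> y = cP ep CARD('d) H (t - \<theta>) +
      (\<Sum>i = 1..H. vP ep CARD('d) H t i * act (zz ep ej H t i y) - vP ep CARD('d) H \<theta> i * act (zz ep ej H \<theta> i y))"
    unfolding netA_zz by (simp add: lin_simps sum_subtractf)
  also have "\<bar>\<dots>\<bar> \<le> norm (t - \<theta>) + (\<Sum>i = 1..H. (A + norm \<theta> * C * Z) * norm (t - \<theta>))"
    by (rule order_trans[OF abs_triangle_ineq add_mono[OF proj_bd(1) order_trans[OF sum_abs sum_mono[OF trm]]]])
  also have "\<dots> = (1 + real H * (A + norm \<theta> * C * Z)) * norm (t - \<theta>)" by (simp add: algebra_simps)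
  finally show "\<bar>netA act ep ej H t y - netA act ep ej H \<theta> y\<bar>
           \<le> (1 + real H * (A + norm \<theta> * C * (1 + real CARD('d) * Y))) * norm (t - \<theta>)" unfolding Z_def .
  have "\<bar>netA act ep ej H t y\<bar> \<le> \<bar>cP ep CARD('d) H t\<bar> + (\<Sum>i = 1..H. \<bar>vP ep CARD('d) H t i * act (zz ep ej H t i y)\<bar>)"
    unfolding netA_zz by (rule order_trans[OF abs_triangle_ineq add_left_mono[OF sum_abs]])
  also have "\<dots> \<le> (norm \<theta> + 1) + (\<Sum>i = 1..H. (norm \<theta> + 1) * A)"
  proof (rule add_mono[OF order_trans[OF proj_bd(1) nt] sum_mono])
    fix i
    show "\<bar>vP ep CARD('d) H t i * act (zz ep ej H t i y)\<bar> \<le> (norm \<theta> + 1) * A"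
      unfolding abs_mult by (intro mult_mono order_trans[OF proj_bd(2) nt] act_bd zt) auto
  qed
  also have "\<dots> = (norm \<theta> + 1) * (1 + real H * A)" by (simp add: algebra_simps)
  finally show "\<bar>netA act ep ej H t y\<bar> \<le> (norm \<theta> + 1) * (1 + real H * A)" .
qed

lemma DN_bound:
  fixes ej :: "nat \<Rightarrow> 'd::finite" and ep :: "nat \<Rightarrow> 'p::finite"
  assumes act'_bd: "\<And>s. \<bar>s\<bar> \<le> M \<Longrightarrow> \<bar>act' s\<bar> \<le> C"
    and act_bd: "\<And>s. \<bar>s\<bar> \<le> M \<Longrightarrow> \<bar>act s\<bar> \<le> A"
    and C0: "C \<ge> 0" and A0: "A \<ge> 0"
    and y: "\<And>k. \<bar>y $ k\<bar> \<le> Y"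
    and M: "M = (norm \<theta> + 1) * (1 + real CARD('d) * Y)"
  shows "\<bar>DN act act' ep ej H \<theta> y h\<bar> \<le> (1 + real H * (A + norm \<theta> * C * (1 + real CARD('d) * Y))) * norm h"
proof -
  define Z where "Z = 1 + real CARD('d) * Y"
  have Y0: "Y \<ge> 0" using y[of undefined] by linarith
  have Z0: "Z \<ge> 0" using Y0 unfolding Z_def by simp
  have z\<theta>: "\<bar>zz ep ej H \<theta> i y\<bar> \<le> M" for i
  proof -
    have "norm \<theta> * Z \<le> (norm \<theta> + 1) * Z" by (rule mult_right_mono) (simp_all add: Z0)
    then show ?thesis
      using zz_bd[OF y, where ej=ej and ep=ep and H=H and h=\<theta> and i=i] unfolding M Z_def[symmetric] by linarith
  qed
  have trm: "\<bar>vP ep CARD('d) H h i * act (zz ep ej H \<theta> i y) + vP ep CARD('d) H \<theta> i * act' (zz ep ej H \<theta> i y) * zz ep ej H h i y\<bar>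
     \<le> (A + norm \<theta> * C * Z) * norm h" for i
  proof -
    have 1: "\<bar>vP ep CARD('d) H h i * act (zz ep ej H \<theta> i y)\<bar> \<le> norm h * A"
      unfolding abs_mult by (intro mult_mono proj_bd act_bd z\<theta>) auto
    have 2: "\<bar>vP ep CARD('d) H \<theta> i * act' (zz ep ej H \<theta> i y) * zz ep ej H h i y\<bar> \<le> norm \<theta> * C * (norm h * Z)"
      unfolding abs_mult using zz_bd[OF y, where ej=ej and ep=ep and H=H and h=h and i=i] unfolding Z_def[symmetric]
      by (intro mult_mono proj_bd act'_bd z\<theta>) (auto simp: C0)
    have "\<bar>vP ep CARD('d) H h i * act (zz ep ej H \<theta> i y) + vP ep CARD('d) H \<theta> i * act' (zz ep ej H \<theta> i y) * zz ep ej H h i y\<bar>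
       \<le> \<bar>vP ep CARD('d) H h i * act (zz ep ej H \<theta> i y)\<bar> + \<bar>vP ep CARD('d) H \<theta> i * act' (zz ep ej H \<theta> i y) * zz ep ej H h i y\<bar>"
      by (rule abs_triangle_ineq)
    also have "\<dots> \<le> norm h * A + norm \<theta> * C * (norm h * Z)" using 1 2 by (rule add_mono)
    also have "\<dots> = (A + norm \<theta> * C * Z) * norm h" by (simp add: algebra_simps)
    finally show ?thesis .
  qed
  have "\<bar>DN act act' ep ej H \<theta> y h\<bar> \<le> norm h + (\<Sum>i = 1..H. (A + norm \<theta> * C * Z) * norm h)"
    unfolding DN_def
    by (rule order_trans[OF abs_triangle_ineq add_mono[OF proj_bd(1) order_trans[OF sum_abs sum_mono[OF trm]]]])
  also have "\<dots> = (1 + real H * (A + norm \<theta> * C * Z)) * norm h" by (simp add: algebra_simps)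
  finally show ?thesis unfolding Z_def .
qed

lemma net_deriv:
  fixes ej :: "nat \<Rightarrow> 'd::finite" and ep :: "nat \<Rightarrow> 'p::finite"
  assumes "\<And>i. i \<in> {1..H} \<Longrightarrow> ((\<lambda>t. vP ep CARD('d) H t i * act (zz ep ej H t i y)) has_derivative
     (\<lambda>h. vP ep CARD('d) H h i * act (zz ep ej H \<theta> i y) + vP ep CARD('d) H \<theta> i * act' (zz ep ej H \<theta> i y) * zz ep ej H h i y)) (at \<theta>)"
  shows "((\<lambda>t. (f y - netA act ep ej H t y)\<^sup>2) has_derivative (\<lambda>h. 2 * (netA act ep ej H \<theta> y - f y) * DN act act' ep ej H \<theta> y h)) (at \<theta>)"
proof -
  have "((\<lambda>t. netA act ep ej H t y) has_derivative DN act act' ep ej H \<theta> y) (at \<theta>)"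
    unfolding netA_zz DN_def[abs_def]
    by (intro has_derivative_add has_derivative_proj has_derivative_sum assms)
  then have "((\<lambda>t. (f y - netA act ep ej H t y)^2) has_derivative (\<lambda>h. of_nat 2 * (0 - DN act act' ep ej H \<theta> y h) * (f y - netA act ep ej H \<theta> y)^(2-1))) (at \<theta>)"
    by (intro has_derivative_power has_derivative_diff has_derivative_const)
  then show ?thesis by (simp add: algebra_simps)
qed

lemma neuron_smooth:
  fixes ej :: "nat \<Rightarrow> 'd::finite" and ep :: "nat \<Rightarrow> 'p::finite"
  assumes "\<And>s. (act has_real_derivative act' s) (at s)"
  shows "((\<lambda>t. vP ep CARD('d) H t i * act (zz ep ej H t i y)) has_derivative
     (\<lambda>h. vP ep CARD('d) H h i * act (zz ep ej H \<theta> i y) + vP ep CARD('d) H \<theta> i * act' (zz ep ej H \<theta> i y) * zz ep ej H h i y)) (at \<theta>)"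
proof -
  have c: "((\<lambda>t. act (zz ep ej H t i y)) has_derivative (\<lambda>h. act' (zz ep ej H \<theta> i y) * zz ep ej H h i y)) (at \<theta>)"
    using has_derivative_compose[OF has_derivative_proj(3) has_field_derivative_imp_has_derivative[OF assms]] .
  have "((\<lambda>t. vP ep CARD('d) H t i * act (zz ep ej H t i y)) has_derivative
     (\<lambda>h. vP ep CARD('d) H \<theta> i * (act' (zz ep ej H \<theta> i y) * zz ep ej H h i y) + vP ep CARD('d) H h i * act (zz ep ej H \<theta> i y))) (at \<theta>)"
    by (rule has_derivative_mult[OF has_derivative_proj(2) c])
  then show ?thesis by (simp add: algebra_simps)
qed

lemma relu_deriv: "z \<noteq> 0 \<Longrightarrow> ((\<lambda>s::real. max s 0) has_real_derivative indicator {0<..} z) (at z)"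
proof -
  assume z: "z \<noteq> 0"
  show ?thesis
  proof (cases "z > 0")
    case True
    have "((\<lambda>s::real. s) has_real_derivative 1) (at z)" by (rule DERIV_ident)
    then have "((\<lambda>s::real. max s 0) has_real_derivative 1) (at z)"
      by (rule has_field_derivative_transform_within_open[where S="{0<..}"]) (use True in auto)
    then show ?thesis using True by (simp add: indicator_def)
  next
    case False
    then have "z < 0" using z by simp
    have "((\<lambda>s::real. 0) has_real_derivative 0) (at z)" by (rule DERIV_const)
    then have "((\<lambda>s::real. max s 0) has_real_derivative 0) (at z)"
      by (rule has_field_derivative_transform_within_open[where S="{..<0}"]) (use \<open>z < 0\<close> in auto)
    then show ?thesis using \<open>z < 0\<close> by (simp add: indicator_def)
  qed
qed

lemma neuron_relu:
  fixes ej :: "nat \<Rightarrow> 'd::finite" and ep :: "nat \<Rightarrow> 'p::finite"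
  assumes "vP ep CARD('d) H \<theta> i = 0 \<or> zz ep ej H \<theta> i y \<noteq> 0"
  shows "((\<lambda>t. vP ep CARD('d) H t i * max (zz ep ej H t i y) 0) has_derivative
     (\<lambda>h. vP ep CARD('d) H h i * max (zz ep ej H \<theta> i y) 0 + vP ep CARD('d) H \<theta> i * indicator {0<..} (zz ep ej H \<theta> i y) * zz ep ej H h i y)) (at \<theta>)"
proof (cases "zz ep ej H \<theta> i y \<noteq> 0")
  case True
  have "\<And>s. s \<noteq> 0 \<Longrightarrow> ((\<lambda>s::real. max s 0) has_real_derivative indicator {0<..} s) (at s)" by (rule relu_deriv)
  have c: "((\<lambda>t. max (zz ep ej H t i y) 0) has_derivative (\<lambda>h. indicator {0<..} (zz ep ej H \<theta> i y) * zz ep ej H h i y)) (at \<theta>)"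
    using has_derivative_compose[OF has_derivative_proj(3) has_field_derivative_imp_has_derivative[OF relu_deriv[OF True]]] .
  have "((\<lambda>t. vP ep CARD('d) H t i * max (zz ep ej H t i y) 0) has_derivative
     (\<lambda>h. vP ep CARD('d) H \<theta> i * (indicator {0<..} (zz ep ej H \<theta> i y) * zz ep ej H h i y) + vP ep CARD('d) H h i * max (zz ep ej H \<theta> i y) 0)) (at \<theta>)"
    by (rule has_derivative_mult[OF has_derivative_proj(2) c])
  then show ?thesis by (simp add: algebra_simps)
next
  case False
  then have v0: "vP ep CARD('d) H \<theta> i = 0" using assms by simp
  have cont: "isCont (\<lambda>t. max (zz ep ej H t i y) 0) \<theta>"
    by (intro continuous_intros linear_continuous_at bl_proj)
  have "((\<lambda>t. vP ep CARD('d) H t i * max (zz ep ej H t i y) 0) has_derivative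
     (\<lambda>h. vP ep CARD('d) H h i * max (zz ep ej H \<theta> i y) 0)) (at \<theta>)"
    by (rule deriv_zero_factor[OF bl_proj(2) v0 cont])
  then show ?thesis by (simp add: v0)
qed

lemma lip_from_deriv:
  fixes F :: "real \<Rightarrow> real"
  assumes dif: "\<And>x. F differentiable (at x)" and bd: "\<And>s. \<bar>s\<bar> \<le> M \<Longrightarrow> \<bar>deriv F s\<bar> \<le> C"
  shows "\<bar>s\<bar> \<le> M \<Longrightarrow> \<bar>u\<bar> \<le> M \<Longrightarrow> \<bar>F s - F u\<bar> \<le> C * \<bar>s - u\<bar>"
proof -
  have main: "\<bar>F u - F s\<bar> \<le> C * \<bar>u - s\<bar>" if su: "s < u" "\<bar>s\<bar> \<le> M" "\<bar>u\<bar> \<le> M" for s u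
  proof -
    have cont: "continuous_on {s..u} F"
      using dif by (meson differentiable_imp_continuous_within continuous_at_imp_continuous_on)
    obtain l z where z: "s < z" "z < u" "DERIV F z :> l" "F u - F s = (u - s) * l"
      using MVT[OF su(1) cont] dif by blast
    have "l = deriv F z" using z(3) dif DERIV_deriv_iff_real_differentiable DERIV_unique by blast
    moreover have "\<bar>z\<bar> \<le> M" using z su by linarith
    ultimately have "\<bar>l\<bar> \<le> C" using bd by simp
    then show ?thesis using z(4) su(1) by (simp add: abs_mult mult_right_mono mult.commute)
  qed
  assume s: "\<bar>s\<bar> \<le> M" and u: "\<bar>u\<bar> \<le> M"
  consider "s < u" | "s = u" | "u < s" by linarith
  then show ?thesis
  proof cases
    case 1 then show ?thesis using main[OF 1 s u] by (simp add: abs_minus_commute)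
  next
    case 2 then show ?thesis by simp
  next
    case 3 then show ?thesis using main[OF 3 u s] by simp
  qed
qed

lemma sq_lip:
  fixes f a b :: real
  assumes "\<bar>a\<bar> \<le> NB" "\<bar>b\<bar> \<le> NB" "\<bar>f\<bar> \<le> FB" "\<bar>a - b\<bar> \<le> L"
  shows "\<bar>(f - a)\<^sup>2 - (f - b)\<^sup>2\<bar> \<le> L * (2 * NB + 2 * FB)"
proof -
  have "(f - a)\<^sup>2 - (f - b)\<^sup>2 = (b - a) * (2 * f - a - b)" by (simp add: power2_eq_square algebra_simps)
  then have "\<bar>(f - a)\<^sup>2 - (f - b)\<^sup>2\<bar> = \<bar>a - b\<bar> * \<bar>2 * f - a - b\<bar>" by (simp add: abs_mult abs_minus_commute)
  also have "\<dots> \<le> L * (2 * NB + 2 * FB)"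
    using assms by (intro mult_mono) auto
  finally show ?thesis .
qed

lemma lin_repr:
  fixes L :: "real^'n \<Rightarrow> real"
  assumes "bounded_linear L"
  shows "L h = (\<chi> k. L (axis k 1)) \<bullet> h"
proof -
  have lin: "linear L" using assms bounded_linear.linear by blast
  have "L h = L (\<Sum>i\<in>UNIV. h $ i *\<^sub>R axis i 1)"
    using basis_expansion[of h] by (simp add: scalar_mult_eq_scaleR)
  also have "\<dots> = (\<Sum>i\<in>UNIV. h $ i * L (axis i 1))"
    by (simp add: linear_sum[OF lin] linear_scale[OF lin])
  also have "\<dots> = (\<chi> k. L (axis k 1)) \<bullet> h"
    by (simp add: inner_vec_def mult.commute)
  finally show ?thesis .
qed

lemma DN_add: "DN act act' ep ej H \<theta> y (h1 + h2) = DN act act' ep ej H \<theta> y h1 + DN act act' ep ej H \<theta> y h2"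
  unfolding DN_def by (simp add: lin_simps zz_simps sum.distrib algebra_simps)

lemma DN_scale: "DN act act' ep ej H \<theta> y (c *\<^sub>R h) = c * DN act act' ep ej H \<theta> y h"
  unfolding DN_def by (simp add: lin_simps zz_simps sum_distrib_left algebra_simps)

lemma zz_cont: "continuous_on S (\<lambda>y. zz ep ej H t i y)"
  unfolding zz_def by (intro continuous_intros)

lemma netA_cont:
  assumes "continuous_on UNIV act"
  shows "continuous_on S (\<lambda>y. netA act ep ej H t y)"
  unfolding netA_zz
  by (intro continuous_intros continuous_on_compose2[OF assms zz_cont]) auto

lemma hyperplane_AE:
  fixes ej :: "nat \<Rightarrow> 'd::finite" and ep :: "nat \<Rightarrow> 'p::finite" and \<mu> :: "(real^'d) measure"
  assumes ej: "bij_betw ej {1..CARD('d)} UNIV"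
    and mu_sets: "sets \<mu> = sets (restrict_space borel (cube a b))"
    and mu_ac: "absolutely_continuous (restrict_space lborel (cube a b)) \<mu>"
    and nz: "bP ep CARD('d) H \<theta> i \<noteq> 0 \<or> (\<exists>j\<in>{1..CARD('d)}. wP ep CARD('d) \<theta> i j \<noteq> 0)"
  shows "AE y in \<mu>. zz ep ej H \<theta> i y \<noteq> 0"
proof -
  define av :: "real^'d" where "av = (\<chi> k. wP ep CARD('d) \<theta> i (inv_into {1..CARD('d)} ej k))"
  have inj: "inj_on ej {1..CARD('d)}" using ej bij_betw_def by blast
  have avj: "av $ ej j = wP ep CARD('d) \<theta> i j" if "j \<in> {1..CARD('d)}" for j
    unfolding av_def using inv_into_f_f[OF inj that] by simp
  have zeq: "zz ep ej H \<theta> i y = bP ep CARD('d) H \<theta> i + av \<bullet> y" for y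
  proof -
    have "(\<Sum>j = 1..CARD('d). wP ep CARD('d) \<theta> i j * y $ ej j) = (\<Sum>j = 1..CARD('d). (\<lambda>k. av $ k * y $ k) (ej j))"
      by (rule sum.cong) (auto simp: avj)
    also have "\<dots> = (\<Sum>k\<in>UNIV. av $ k * y $ k)" by (rule sum.reindex_bij_betw[OF ej])
    finally show ?thesis unfolding zz_def inner_vec_def by simp
  qed
  define S0 where "S0 = {y::real^'d. av \<bullet> y = - bP ep CARD('d) H \<theta> i}"
  have "av \<noteq> 0 \<or> - bP ep CARD('d) H \<theta> i \<noteq> 0"
    using nz avj by (metis neg_equal_0_iff_equal zero_index)
  then have "negligible S0" unfolding S0_def by (rule negligible_hyperplane)
  then have "S0 \<in> null_sets lebesgue" by (simp add: negligible_iff_null_sets)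
  moreover have S0b: "S0 \<in> sets borel" unfolding S0_def by (intro borel_closed closed_hyperplane)
  ultimately have "S0 \<in> null_sets lborel" using null_sets_completion_iff[of S0 lborel] by simp
  then have "S0 \<inter> cube a b \<in> null_sets lborel"
    by (rule null_sets_subset) (auto simp: cube_def S0b)
  then have "S0 \<inter> cube a b \<in> null_sets (restrict_space lborel (cube a b))"
    by (subst null_sets_restrict_space) (auto simp: cube_def)
  then have N: "S0 \<inter> cube a b \<in> null_sets \<mu>" using mu_ac unfolding absolutely_continuous_def by blast
  have sp: "space \<mu> = cube a b"
    using sets_eq_imp_space_eq[OF mu_sets] by (simp add: space_restrict_space)
  show ?thesis
    by (rule AE_I'[OF N]) (auto simp: sp S0_def zeq)
qed

lemma D_bound:
  fixes ej :: "nat \<Rightarrow> 'd::finite" and ep :: "nat \<Rightarrow> 'p::finite"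
  assumes act_lip: "\<And>s u. \<bar>s\<bar> \<le> M \<Longrightarrow> \<bar>u\<bar> \<le> M \<Longrightarrow> \<bar>act s - act u\<bar> \<le> C * \<bar>s - u\<bar>"
    and act_bd: "\<And>s. \<bar>s\<bar> \<le> M \<Longrightarrow> \<bar>act s\<bar> \<le> A"
    and act'_bd: "\<And>s. \<bar>s\<bar> \<le> M \<Longrightarrow> \<bar>act' s\<bar> \<le> C"
    and C0: "C \<ge> 0" and A0: "A \<ge> 0"
    and y: "\<And>k. \<bar>y $ k\<bar> \<le> Y" and fy: "\<bar>f y\<bar> \<le> FB"
    and M: "M = (norm \<theta> + 1) * (1 + real CARD('d) * Y)"
  shows "\<bar>2 * (netA act ep ej H \<theta> y - f y) * DN act act' ep ej H \<theta> y h\<bar>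
     \<le> (2 * ((norm \<theta> + 1) * (1 + real H * A) + FB) * (1 + real H * (A + norm \<theta> * C * (1 + real CARD('d) * Y)))) * norm h"
proof -
  have N: "\<bar>netA act ep ej H \<theta> y\<bar> \<le> (norm \<theta> + 1) * (1 + real H * A)"
    by (rule net_bounds(2)[OF act_lip act_bd C0 A0 y _ M]) simp_all
  have DNb: "\<bar>DN act act' ep ej H \<theta> y h\<bar> \<le> (1 + real H * (A + norm \<theta> * C * (1 + real CARD('d) * Y))) * norm h"
    by (rule DN_bound[OF act'_bd act_bd C0 A0 y M])
  have "\<bar>2 * (netA act ep ej H \<theta> y - f y) * DN act act' ep ej H \<theta> y h\<bar>
      = (2 * \<bar>netA act ep ej H \<theta> y - f y\<bar>) * \<bar>DN act act' ep ej H \<theta> y h\<bar>" unfolding abs_mult by simp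
  also have "\<dots> \<le> (2 * ((norm \<theta> + 1) * (1 + real H * A) + FB)) * ((1 + real H * (A + norm \<theta> * C * (1 + real CARD('d) * Y))) * norm h)"
    using N fy DNb by (intro mult_mono) auto
  finally show ?thesis by (simp add: mult.assoc)
qed

lemma D_meas:
  fixes ej :: "nat \<Rightarrow> 'd::finite" and ep :: "nat \<Rightarrow> 'p::finite" and \<mu> :: "(real^'d) measure"
    and f :: "real^'d \<Rightarrow> real"
  assumes mu_sets: "sets \<mu> = sets (restrict_space borel (cube a b))"
    and f: "continuous_on (cube a b) f"
    and act_c: "continuous_on UNIV act"
    and act'_m: "act' \<in> borel_measurable borel"
  shows "(\<lambda>y. 2 * (netA act ep ej H \<theta> y - f y) * DN act act' ep ej H \<theta> y h) \<in> borel_measurable \<mu>"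
proof -
  have mc: "measurable \<mu> borel = measurable (restrict_space borel (cube a b)) borel"
    by (rule measurable_cong_sets[OF mu_sets refl])
  have cm: "g \<in> borel_measurable \<mu>" if "continuous_on (cube a b) g" for g :: "real^'d \<Rightarrow> real"
    unfolding mc by (rule borel_measurable_continuous_on_restrict[OF that])
  have zm: "(\<lambda>y. zz ep ej H t i y) \<in> borel_measurable \<mu>" for t i by (intro cm zz_cont)
  have am: "(\<lambda>y. act' (zz ep ej H \<theta> i y)) \<in> borel_measurable \<mu>" for i
    by (rule measurable_compose[OF zm act'_m])
  have acm: "(\<lambda>y. act (zz ep ej H \<theta> i y)) \<in> borel_measurable \<mu>" for i
    by (intro cm continuous_on_compose2[OF act_c zz_cont]) auto
  show ?thesis unfolding DN_def
    by (intro borel_measurable_times borel_measurable_add borel_measurable_sum borel_measurable_diff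
        borel_measurable_const cm netA_cont act_c f am acm zm)
qed

lemma risk_deriv:
  fixes ej :: "nat \<Rightarrow> 'd::finite" and ep :: "nat \<Rightarrow> 'p::finite" and \<mu> :: "(real^'d) measure"
    and f :: "real^'d \<Rightarrow> real"
  assumes fin: "finite_measure \<mu>"
    and mu_sets: "sets \<mu> = sets (restrict_space borel (cube a b))"
    and f: "continuous_on (cube a b) f"
    and ybd: "\<And>(y::real^'d) k. y \<in> cube a b \<Longrightarrow> \<bar>y $ k\<bar> \<le> Y"
    and FB: "\<And>y::real^'d. y \<in> cube a b \<Longrightarrow> \<bar>f y\<bar> \<le> FB"
    and act_c: "continuous_on UNIV act"
    and act'_m: "act' \<in> borel_measurable borel"
    and act_lip: "\<And>s u. \<bar>s\<bar> \<le> M \<Longrightarrow> \<bar>u\<bar> \<le> M \<Longrightarrow> \<bar>act s - act u\<bar> \<le> C * \<bar>s - u\<bar>"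
    and act_bd: "\<And>s. \<bar>s\<bar> \<le> M \<Longrightarrow> \<bar>act s\<bar> \<le> A"
    and act'_bd: "\<And>s. \<bar>s\<bar> \<le> M \<Longrightarrow> \<bar>act' s\<bar> \<le> C"
    and C0: "C \<ge> 0" and A0: "A \<ge> 0"
    and M: "M = (norm \<theta> + 1) * (1 + real CARD('d) * Y)"
    and der: "AE y in \<mu>. ((\<lambda>t. (f y - netA act ep ej H t y)\<^sup>2) has_derivative
                 (\<lambda>h. 2 * (netA act ep ej H \<theta> y - f y) * DN act act' ep ej H \<theta> y h)) (at \<theta>)"
  shows "(riskA act ep ej H f \<mu> has_derivative
           (\<lambda>h. \<integral>y. 2 * (netA act ep ej H \<theta> y - f y) * DN act act' ep ej H \<theta> y h \<partial>\<mu>)) (at \<theta>)"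
proof -
  have sp: "space \<mu> = cube a b"
    using sets_eq_imp_space_eq[OF mu_sets] by (simp add: space_restrict_space)
  have mc: "measurable \<mu> borel = measurable (restrict_space borel (cube a b)) borel"
    by (rule measurable_cong_sets[OF mu_sets refl])
  have cm: "g \<in> borel_measurable \<mu>" if "continuous_on (cube a b) g" for g :: "real^'d \<Rightarrow> real"
    unfolding mc by (rule borel_measurable_continuous_on_restrict[OF that])
  define NB where "NB = (norm \<theta> + 1) * (1 + real H * A)"
  define KN where "KN = 1 + real H * (A + norm \<theta> * C * (1 + real CARD('d) * Y))"
  have NB0: "NB \<ge> 0" unfolding NB_def using A0 by simp
  show ?thesis unfolding riskA_def
  proof (rule int_has_derivative[where \<delta>=1 and B="2 * (NB + FB) * KN" and K="KN * (2 * NB + 2 * FB)" and C="(FB + NB)\<^sup>2"])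
    show "finite_measure \<mu>" by fact
    show "(\<lambda>y. (f y - netA act ep ej H t y)\<^sup>2) \<in> borel_measurable \<mu>" for t
      by (intro cm continuous_intros f netA_cont act_c)
    show "(\<lambda>y. 2 * (netA act ep ej H \<theta> y - f y) * DN act act' ep ej H \<theta> y h) \<in> borel_measurable \<mu>" for h
    proof -
      have zm: "(\<lambda>y. zz ep ej H t i y) \<in> borel_measurable \<mu>" for t i by (intro cm zz_cont)
      have am: "(\<lambda>y. act' (zz ep ej H \<theta> i y)) \<in> borel_measurable \<mu>" for i
        by (rule measurable_compose[OF zm act'_m])
      have acm: "(\<lambda>y. act (zz ep ej H \<theta> i y)) \<in> borel_measurable \<mu>" for i
        by (intro cm continuous_on_compose2[OF act_c zz_cont]) auto
      show ?thesis unfolding DN_def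
        by (intro borel_measurable_times borel_measurable_add borel_measurable_sum borel_measurable_diff
            borel_measurable_const cm netA_cont act_c f am acm zm)
    qed
    show "2 * (netA act ep ej H \<theta> y - f y) * DN act act' ep ej H \<theta> y (h1 + h2) =
          2 * (netA act ep ej H \<theta> y - f y) * DN act act' ep ej H \<theta> y h1 + 2 * (netA act ep ej H \<theta> y - f y) * DN act act' ep ej H \<theta> y h2" for y h1 h2
      by (simp add: DN_add algebra_simps)
    show "2 * (netA act ep ej H \<theta> y - f y) * DN act act' ep ej H \<theta> y (c *\<^sub>R h) =
          c * (2 * (netA act ep ej H \<theta> y - f y) * DN act act' ep ej H \<theta> y h)" for y c h
      by (simp add: DN_scale algebra_simps)
    show "\<bar>2 * (netA act ep ej H \<theta> y - f y) * DN act act' ep ej H \<theta> y h\<bar> \<le> 2 * (NB + FB) * KN * norm h"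
      if "y \<in> space \<mu>" for y h
    proof -
      have y': "\<And>k. \<bar>y $ k\<bar> \<le> Y" using ybd[of y] that sp by simp
      have fy: "\<bar>f y\<bar> \<le> FB" using FB that sp by auto
      show ?thesis using D_bound[where f=f and y=y and ep=ep and ej=ej and H=H and h=h, OF act_lip act_bd act'_bd C0 A0 y' fy M] unfolding NB_def KN_def
        by (simp add: mult.assoc)
    qed
    show "(0::real) < 1" by simp
    show "\<bar>(f y - netA act ep ej H t y)\<^sup>2 - (f y - netA act ep ej H \<theta> y)\<^sup>2\<bar> \<le> KN * (2 * NB + 2 * FB) * norm (t - \<theta>)"
      if "t \<in> ball \<theta> 1" "y \<in> space \<mu>" for t y
    proof -
      have tn: "norm (t - \<theta>) < 1" using that by (simp add: dist_norm norm_minus_commute)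
      have y': "\<And>k. \<bar>y $ k\<bar> \<le> Y" using ybd[of y] that sp by simp
      have "\<bar>(f y - netA act ep ej H t y)\<^sup>2 - (f y - netA act ep ej H \<theta> y)\<^sup>2\<bar> \<le> (KN * norm (t - \<theta>)) * (2 * NB + 2 * FB)"
        apply (rule sq_lip)
        using net_bounds[OF act_lip act_bd C0 A0 y' tn M, of ep ej H] net_bounds(2)[OF act_lip act_bd C0 A0 y' _ M, of \<theta> ep ej H]
          FB[of y] that sp unfolding NB_def KN_def by auto
      then show ?thesis by (simp add: mult_ac)
    qed
    show "\<bar>(f y - netA act ep ej H \<theta> y)\<^sup>2\<bar> \<le> (FB + NB)\<^sup>2" if "y \<in> space \<mu>" for y
    proof -
      have y': "\<And>k. \<bar>y $ k\<bar> \<le> Y" using ybd[of y] that sp by simp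
      have "\<bar>f y - netA act ep ej H \<theta> y\<bar> \<le> FB + NB"
        using net_bounds(2)[OF act_lip act_bd C0 A0 y' _ M, of \<theta> ep ej H] FB[of y] that sp unfolding NB_def by auto
      then have "\<bar>f y - netA act ep ej H \<theta> y\<bar>\<^sup>2 \<le> (FB + NB)\<^sup>2" by (rule power_mono) simp
      then show ?thesis by simp
    qed
  qed (rule der)
qed

theorem proposition2p11:
  fixes H :: nat and a b :: real
    and f :: "real^'d \<Rightarrow> real"
    and ep :: "nat \<Rightarrow> 'p::finite" and ej :: "nat \<Rightarrow> 'd::finite"
    and R :: "nat \<Rightarrow> real \<Rightarrow> real"
    and \<mu> :: "(real^'d) measure"
    and G :: "real^'p \<Rightarrow> real^'p"
    and \<theta> :: "real^'p"
  assumes H: "H \<ge> 1"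
    and dimp: "CARD('p) = CARD('d) * H + 2 * H + 1"
    and ep: "bij_betw ep {1..CARD('d) * H + 2 * H + 1} UNIV"
    and ej: "bij_betw ej {1..CARD('d)} UNIV"
    and ab: "a < b"
    and f: "continuous_on (cube a b) f"
    and R_C1: "\<forall>r\<ge>1. (\<forall>x. R r differentiable (at x)) \<and> continuous_on UNIV (deriv (R r))"
    and R_lim: "\<forall>x. ((\<lambda>r. \<bar>R r x - max x 0\<bar> + \<bar>deriv (R r) x - indicator {0<..} x\<bar>)
                      \<longlongrightarrow> 0) sequentially"
    and R_bd: "\<forall>x. \<exists>C. \<forall>r\<ge>1. \<forall>y\<in>{-\<bar>x\<bar>..\<bar>x\<bar>}. \<bar>deriv (R r) y\<bar> \<le> C"
    and mu_fin: "finite_measure \<mu>"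
    and mu_sets: "sets \<mu> = sets (restrict_space borel (cube a b))"
    and mu_ac: "absolutely_continuous (restrict_space lborel (cube a b)) \<mu>"
    and G: "\<forall>\<theta>' g v. (\<forall>r\<ge>1. (riskA (R r) ep ej H f \<mu> has_derivative (\<lambda>h. g r \<bullet> h)) (at \<theta>'))
               \<longrightarrow> (g \<longlongrightarrow> v) sequentially \<longrightarrow> G \<theta>' = v"
    and hyp: "riskA (\<lambda>t. max t 0) ep ej H f \<mu> \<theta> *
              (\<Sum>i = 1..H. \<bar>vP ep CARD('d) H \<theta> i\<bar> *
                 indicator {0} (\<bar>bP ep CARD('d) H \<theta> i\<bar>
                   + (\<Sum>j = 1..CARD('d). \<bar>wP ep CARD('d) \<theta> i j\<bar>))) = 0"
  shows "(riskA (\<lambda>t. max t 0) ep ej H f \<mu> has_derivative (\<lambda>h. G \<theta> \<bullet> h)) (at \<theta>)"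
proof -
  define Y where "Y = \<bar>a\<bar> + \<bar>b\<bar>"
  have ybd: "\<And>(y::real^'d) k. y \<in> cube a b \<Longrightarrow> \<bar>y $ k\<bar> \<le> Y"
  proof -
    fix y :: "real^'d" and k assume "y \<in> cube a b"
    then have "a \<le> y $ k" "y $ k \<le> b" by (auto simp: cube_def mem_box_cart)
    then show "\<bar>y $ k\<bar> \<le> Y" unfolding Y_def by linarith
  qed
  have Y0: "Y \<ge> 0" unfolding Y_def by simp
  define Z where "Z = 1 + real CARD('d) * Y"
  define M0 where "M0 = (norm \<theta> + 1) * Z"
  have Z0: "Z \<ge> 0" unfolding Z_def using Y0 by simp
  have M00: "M0 \<ge> 0" unfolding M0_def using Z0 by simp
  have M0eq: "M0 = (norm \<theta> + 1) * (1 + real CARD('d) * Y)" unfolding M0_def Z_def ..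
  have sp: "space \<mu> = cube a b"
    using sets_eq_imp_space_eq[OF mu_sets] by (simp add: space_restrict_space)
  have mc: "measurable \<mu> borel = measurable (restrict_space borel (cube a b)) borel"
    by (rule measurable_cong_sets[OF mu_sets refl])
  have cm: "g \<in> borel_measurable \<mu>" if "continuous_on (cube a b) g" for g :: "real^'d \<Rightarrow> real"
    unfolding mc by (rule borel_measurable_continuous_on_restrict[OF that])
  have cbd: "\<exists>B. \<forall>y\<in>cube a b. \<bar>g y\<bar> \<le> B" if "continuous_on (cube a b) g" for g :: "real^'d \<Rightarrow> real"
  proof -
    have "compact (g ` cube a b)" by (rule compact_continuous_image[OF that]) (simp add: cube_def)
    then have "bounded (g ` cube a b)" by (rule compact_imp_bounded)
    then show ?thesis by (auto simp: bounded_iff)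
  qed
  have cint: "integrable \<mu> g" if gc: "continuous_on (cube a b) g" for g :: "real^'d \<Rightarrow> real"
  proof -
    interpret finite_measure \<mu> by (rule mu_fin)
    obtain B where B: "\<forall>y\<in>cube a b. \<bar>g y\<bar> \<le> B" using cbd[OF gc] by blast
    show ?thesis by (rule integrable_const_bound[where B=B]) (use B sp cm[OF gc] in auto)
  qed
  obtain FB where FB: "\<And>y::real^'d. y \<in> cube a b \<Longrightarrow> \<bar>f y\<bar> \<le> FB"
    using cbd[OF f] by blast
  obtain CR where CR: "\<And>r s. r \<ge> 1 \<Longrightarrow> \<bar>s\<bar> \<le> M0 \<Longrightarrow> \<bar>deriv (R r) s\<bar> \<le> CR"
  proof -
    obtain C where C: "\<forall>r\<ge>1. \<forall>y\<in>{-\<bar>M0\<bar>..\<bar>M0\<bar>}. \<bar>deriv (R r) y\<bar> \<le> C" using R_bd by blast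
    show ?thesis
    proof (rule that[of C])
      fix r :: nat and s :: real assume r: "r \<ge> 1" and s: "\<bar>s\<bar> \<le> M0"
      have "s \<in> {-\<bar>M0\<bar>..\<bar>M0\<bar>}" using s M00 by auto
      then show "\<bar>deriv (R r) s\<bar> \<le> C" using C r by blast
    qed
  qed
  have Rlim1: "(\<lambda>r. R r x) \<longlonglongrightarrow> max x 0" and Rlim2: "(\<lambda>r. deriv (R r) x) \<longlonglongrightarrow> indicator {0<..} x" for x
  proof -
    have s: "(\<lambda>r. \<bar>R r x - max x 0\<bar> + \<bar>deriv (R r) x - indicator {0<..} x\<bar>) \<longlonglongrightarrow> 0"
      using R_lim by blast
    have "(\<lambda>r. R r x - max x 0) \<longlonglongrightarrow> 0"
      by (rule Lim_null_comparison[OF _ s]) (simp add: always_eventually)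
    then show "(\<lambda>r. R r x) \<longlonglongrightarrow> max x 0" by (rule LIM_zero_cancel)
    have "(\<lambda>r. deriv (R r) x - indicator {0<..} x) \<longlonglongrightarrow> 0"
      by (rule Lim_null_comparison[OF _ s]) (simp add: always_eventually)
    then show "(\<lambda>r. deriv (R r) x) \<longlonglongrightarrow> indicator {0<..} x" by (rule LIM_zero_cancel)
  qed
  obtain A0 where A0: "\<And>r. \<bar>R r 0\<bar> \<le> A0" "A0 \<ge> 0"
  proof -
    have "Bseq (\<lambda>r. R r 0)" using Rlim1[of 0] by (intro convergent_imp_Bseq convergentI)
    then obtain K where "K > 0" "\<forall>r. norm (R r 0) \<le> K" by (rule BseqE)
    then show ?thesis using that[of K] by auto
  qed
  define Cc where "Cc = max CR 1"
  define Ac where "Ac = A0 + Cc * M0"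
  have Cc0: "Cc \<ge> 0" and Cc1: "Cc \<ge> 1" unfolding Cc_def by auto
  have Ac0: "Ac \<ge> 0" unfolding Ac_def using A0 Cc0 M00 by simp
  have MAc: "M0 \<le> Ac" unfolding Ac_def using A0(2) Cc1 M00 mult_right_mono[OF Cc1 M00] by simp
  have Rdiff: "R r differentiable (at x)" if "r \<ge> 1" for r x using R_C1 that by blast
  have Rder: "(R r has_real_derivative deriv (R r) s) (at s)" if "r \<ge> 1" for r s
    using Rdiff[OF that] DERIV_deriv_iff_real_differentiable by blast
  have R'bd: "\<bar>deriv (R r) s\<bar> \<le> Cc" if "r \<ge> 1" "\<bar>s\<bar> \<le> M0" for r s
    using CR[OF that] unfolding Cc_def by linarith
  have Rlip: "\<bar>R r s - R r u\<bar> \<le> Cc * \<bar>s - u\<bar>" if "r \<ge> 1" "\<bar>s\<bar> \<le> M0" "\<bar>u\<bar> \<le> M0" for r s u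
    by (rule lip_from_deriv[OF Rdiff[OF that(1)] R'bd[OF that(1)] that(2,3)])
  have Rbd: "\<bar>R r s\<bar> \<le> Ac" if "r \<ge> 1" "\<bar>s\<bar> \<le> M0" for r s
  proof -
    have "\<bar>R r s - R r 0\<bar> \<le> Cc * \<bar>s - 0\<bar>" by (rule Rlip) (use that M00 in auto)
    also have "\<dots> \<le> Cc * M0" using that Cc0 by (simp add: mult_left_mono)
    finally show ?thesis using A0(1)[of r] unfolding Ac_def by linarith
  qed
  have Rcont: "continuous_on UNIV (R r)" if "r \<ge> 1" for r
    using Rdiff[OF that] by (meson differentiable_imp_continuous_within continuous_at_imp_continuous_on)
  have R'meas: "deriv (R r) \<in> borel_measurable borel" if "r \<ge> 1" for r
    using R_C1 that by (simp add: borel_measurable_continuous_onI)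
  define Dr where "Dr r y h = 2 * (netA (R r) ep ej H \<theta> y - f y) * DN (R r) (deriv (R r)) ep ej H \<theta> y h" for r y h
  define D0 where "D0 y h = 2 * (netA (\<lambda>t. max t 0) ep ej H \<theta> y - f y) * DN (\<lambda>t. max t 0) (indicator {0<..}) ep ej H \<theta> y h" for y h
  have dR: "(riskA (R r) ep ej H f \<mu> has_derivative (\<lambda>h. \<integral>y. Dr r y h \<partial>\<mu>)) (at \<theta>)" if r: "r \<ge> 1" for r
    unfolding Dr_def
  proof (rule risk_deriv[OF mu_fin mu_sets f ybd FB Rcont[OF r] R'meas[OF r] Rlip[OF r] Rbd[OF r] R'bd[OF r] Cc0 Ac0 M0eq])
    show "AE y in \<mu>. ((\<lambda>t. (f y - netA (R r) ep ej H t y)\<^sup>2) has_derivative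
       (\<lambda>h. 2 * (netA (R r) ep ej H \<theta> y - f y) * DN (R r) (deriv (R r)) ep ej H \<theta> y h)) (at \<theta>)"
      by (intro AE_I2 net_deriv neuron_smooth Rder[OF r])
  qed
  have relu_lip: "\<bar>max s 0 - max u 0\<bar> \<le> Cc * \<bar>s - u\<bar>" if "\<bar>s\<bar> \<le> M0" "\<bar>u\<bar> \<le> M0" for s u :: real
  proof -
    have "\<bar>max s 0 - max u 0\<bar> \<le> \<bar>s - u\<bar>" by (simp add: max_def abs_if)
    also have "\<dots> \<le> Cc * \<bar>s - u\<bar>" using Cc1 mult_right_mono[OF Cc1, of "\<bar>s - u\<bar>"] by simp
    finally show ?thesis .
  qed
  have relu_bd: "\<bar>max s 0\<bar> \<le> Ac" if "\<bar>s\<bar> \<le> M0" for s :: real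
    using that MAc by (simp add: abs_le_iff max_def)
  have ind_bd: "\<bar>indicator {0<..} s\<bar> \<le> Cc" if "\<bar>s\<bar> \<le> M0" for s :: real
    using Cc1 by (simp add: indicator_def)
  have relu_cont: "continuous_on UNIV (\<lambda>s::real. max s 0)" by (intro continuous_intros)
  have ind_meas: "(indicator {0<..} :: real \<Rightarrow> real) \<in> borel_measurable borel"
    by (intro borel_measurable_indicator) simp
  have der0: "AE y in \<mu>. ((\<lambda>t. (f y - netA (\<lambda>t. max t 0) ep ej H t y)\<^sup>2) has_derivative
       (\<lambda>h. 2 * (netA (\<lambda>t. max t 0) ep ej H \<theta> y - f y) * DN (\<lambda>t. max t 0) (indicator {0<..}) ep ej H \<theta> y h)) (at \<theta>)"
  proof -
    have "riskA (\<lambda>t. max t 0) ep ej H f \<mu> \<theta> = 0 \<or>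
          (\<Sum>i = 1..H. \<bar>vP ep CARD('d) H \<theta> i\<bar> *
                 indicator {0} (\<bar>bP ep CARD('d) H \<theta> i\<bar> + (\<Sum>j = 1..CARD('d). \<bar>wP ep CARD('d) \<theta> i j\<bar>))) = (0::real)"
      using hyp by simp
    then show ?thesis
    proof (elim disjE)
      assume L0: "riskA (\<lambda>t. max t 0) ep ej H f \<mu> \<theta> = 0"
      have int: "integrable \<mu> (\<lambda>y. (f y - netA (\<lambda>t. max t 0) ep ej H \<theta> y)\<^sup>2)"
        by (intro cint continuous_intros f netA_cont relu_cont)
      have "(\<integral>y. (f y - netA (\<lambda>t. max t 0) ep ej H \<theta> y)\<^sup>2 \<partial>\<mu>) = 0 \<longleftrightarrow>
            (AE y in \<mu>. (f y - netA (\<lambda>t. max t 0) ep ej H \<theta> y)\<^sup>2 = 0)"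
        by (rule integral_nonneg_eq_0_iff_AE[OF int]) simp
      then have ae0: "AE y in \<mu>. (f y - netA (\<lambda>t. max t 0) ep ej H \<theta> y)\<^sup>2 = 0"
        using L0 unfolding riskA_def by simp
      have "AE y in \<mu>. y \<in> space \<mu>" by (rule AE_space)
      with ae0 show ?thesis
      proof eventually_elim
        fix y assume y0: "(f y - netA (\<lambda>t. max t 0) ep ej H \<theta> y)\<^sup>2 = 0" and ys: "y \<in> space \<mu>"
        have fy: "f y = netA (\<lambda>t. max t 0) ep ej H \<theta> y" using y0 by simp
        have y': "\<And>k. \<bar>y $ k\<bar> \<le> Y" using ybd[of y] ys sp by simp
        define KN where "KN = 1 + real H * (Ac + norm \<theta> * Cc * (1 + real CARD('d) * Y))"
        have qd: "((\<lambda>t. (f y - netA (\<lambda>t. max t 0) ep ej H t y)\<^sup>2) has_derivative (\<lambda>h. 0)) (at \<theta>)"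
        proof (rule deriv_quad_zero[where \<delta>=1 and K="KN\<^sup>2"])
          show "(0::real) < 1" by simp
          fix t assume "t \<in> ball \<theta> 1"
          then have tn: "norm (t - \<theta>) < 1" by (simp add: dist_norm norm_minus_commute)
          have nb: "\<bar>netA (\<lambda>t. max t 0) ep ej H t y - netA (\<lambda>t. max t 0) ep ej H \<theta> y\<bar> \<le> KN * norm (t - \<theta>)"
            unfolding KN_def
            by (rule net_bounds(1)[where act="\<lambda>t. max t 0" and M=M0 and C=Cc and A=Ac, OF relu_lip relu_bd Cc0 Ac0 y' tn M0eq])
          have "\<bar>netA (\<lambda>t. max t 0) ep ej H t y - netA (\<lambda>t. max t 0) ep ej H \<theta> y\<bar>\<^sup>2 \<le> (KN * norm (t - \<theta>))\<^sup>2"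
            by (rule power_mono[OF nb]) simp
          then show "\<bar>(f y - netA (\<lambda>t. max t 0) ep ej H t y)\<^sup>2\<bar> \<le> KN\<^sup>2 * (norm (t - \<theta>))\<^sup>2"
            unfolding fy by (simp add: power_mult_distrib power2_commute)
        qed
        then show "((\<lambda>t. (f y - netA (\<lambda>t. max t 0) ep ej H t y)\<^sup>2) has_derivative
           (\<lambda>h. 2 * (netA (\<lambda>t. max t 0) ep ej H \<theta> y - f y) * DN (\<lambda>t. max t 0) (indicator {0<..}) ep ej H \<theta> y h)) (at \<theta>)"
          by (simp add: fy)
      qed
    next
      assume S0: "(\<Sum>i = 1..H. \<bar>vP ep CARD('d) H \<theta> i\<bar> *
                 indicator {0} (\<bar>bP ep CARD('d) H \<theta> i\<bar> + (\<Sum>j = 1..CARD('d). \<bar>wP ep CARD('d) \<theta> i j\<bar>))) = (0::real)"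
      have each: "vP ep CARD('d) H \<theta> i = 0 \<or> bP ep CARD('d) H \<theta> i \<noteq> 0 \<or> (\<exists>j\<in>{1..CARD('d)}. wP ep CARD('d) \<theta> i j \<noteq> 0)"
        if i: "i \<in> {1..H}" for i
      proof -
        define T where "T i = \<bar>vP ep CARD('d) H \<theta> i\<bar> *
                 indicator {0} (\<bar>bP ep CARD('d) H \<theta> i\<bar> + (\<Sum>j = 1..CARD('d). \<bar>wP ep CARD('d) \<theta> i j\<bar>))" for i
        have T0: "\<And>i. 0 \<le> T i" unfolding T_def by (simp add: indicator_def)
        have "sum T {1..H} = 0" using S0 unfolding T_def .
        then have "T i = 0" using sum_nonneg_eq_0_iff[of "{1..H}" T] T0 i by simp
        then have vb: "vP ep CARD('d) H \<theta> i = 0 \<or> \<bar>bP ep CARD('d) H \<theta> i\<bar> + (\<Sum>j = 1..CARD('d). \<bar>wP ep CARD('d) \<theta> i j\<bar>) \<noteq> 0"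
          unfolding T_def by (auto simp: indicator_def split: if_splits)
        show ?thesis
        proof (rule ccontr)
          assume c: "\<not> ?thesis"
          then have "(\<Sum>j = 1..CARD('d). \<bar>wP ep CARD('d) \<theta> i j\<bar>) = 0" by (intro sum.neutral) auto
          then show False using c vb by simp
        qed
      qed
      have AEz: "AE y in \<mu>. \<forall>i\<in>{1..H}. vP ep CARD('d) H \<theta> i = 0 \<or> zz ep ej H \<theta> i y \<noteq> 0"
      proof (rule AE_finite_allI)
        fix i assume i: "i \<in> {1..H}"
        show "AE y in \<mu>. vP ep CARD('d) H \<theta> i = 0 \<or> zz ep ej H \<theta> i y \<noteq> 0"
        proof (cases "vP ep CARD('d) H \<theta> i = 0")
          case True then show ?thesis by simp
        next
          case False
          then have nz: "bP ep CARD('d) H \<theta> i \<noteq> 0 \<or> (\<exists>j\<in>{1..CARD('d)}. wP ep CARD('d) \<theta> i j \<noteq> 0)"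
            using each[OF i] by simp
          show ?thesis using hyperplane_AE[OF ej mu_sets mu_ac nz] by (rule eventually_mono) simp
        qed
      qed simp
      then show ?thesis
      proof eventually_elim
        fix y assume "\<forall>i\<in>{1..H}. vP ep CARD('d) H \<theta> i = 0 \<or> zz ep ej H \<theta> i y \<noteq> 0"
        then show "((\<lambda>t. (f y - netA (\<lambda>t. max t 0) ep ej H t y)\<^sup>2) has_derivative
           (\<lambda>h. 2 * (netA (\<lambda>t. max t 0) ep ej H \<theta> y - f y) * DN (\<lambda>t. max t 0) (indicator {0<..}) ep ej H \<theta> y h)) (at \<theta>)"
          by (intro net_deriv neuron_relu) blast
      qed
    qed
  qed
  have dL: "(riskA (\<lambda>t. max t 0) ep ej H f \<mu> has_derivative (\<lambda>h. \<integral>y. D0 y h \<partial>\<mu>)) (at \<theta>)"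
    unfolding D0_def
    by (rule risk_deriv[where act="\<lambda>t. max t 0" and act'="indicator {0<..}" and M=M0 and C=Cc and A=Ac and f=f and \<mu>=\<mu> and Y=Y and FB=FB,
          OF mu_fin mu_sets f ybd FB relu_cont ind_meas relu_lip relu_bd ind_bd Cc0 Ac0 M0eq der0])
  define g where "g r = (\<chi> k. \<integral>y. Dr r y (axis k 1) \<partial>\<mu>)" for r
  define v where "v = (\<chi> k. \<integral>y. D0 y (axis k 1) \<partial>\<mu>)"
  have dR': "(riskA (R r) ep ej H f \<mu> has_derivative (\<lambda>h. g r \<bullet> h)) (at \<theta>)" if r: "r \<ge> 1" for r
  proof -
    have "(\<lambda>h. \<integral>y. Dr r y h \<partial>\<mu>) = (\<lambda>h. g r \<bullet> h)"
    proof
      fix h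
      show "(\<integral>y. Dr r y h \<partial>\<mu>) = g r \<bullet> h"
        using lin_repr[OF has_derivative_bounded_linear[OF dR[OF r]], of h] unfolding g_def by simp
    qed
    then show ?thesis using dR[OF r] by simp
  qed
  have dL': "(riskA (\<lambda>t. max t 0) ep ej H f \<mu> has_derivative (\<lambda>h. v \<bullet> h)) (at \<theta>)"
  proof -
    have "(\<lambda>h. \<integral>y. D0 y h \<partial>\<mu>) = (\<lambda>h. v \<bullet> h)"
    proof
      fix h
      show "(\<integral>y. D0 y h \<partial>\<mu>) = v \<bullet> h"
        using lin_repr[OF has_derivative_bounded_linear[OF dL], of h] unfolding v_def by simp
    qed
    then show ?thesis using dL by simp
  qed
  define Bc where "Bc = 2 * ((norm \<theta> + 1) * (1 + real H * Ac) + FB) * (1 + real H * (Ac + norm \<theta> * Cc * (1 + real CARD('d) * Y)))"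
  have gv: "g \<longlonglongrightarrow> v"
  proof (rule vec_tendstoI)
    fix k
    have "(\<lambda>r. g (r + 1) $ k) \<longlonglongrightarrow> v $ k"
      unfolding g_def v_def vec_lambda_beta
    proof (rule integral_dominated_convergence[where w="\<lambda>_. Bc * norm (axis k (1::real))"])
      show "(\<lambda>y. D0 y (axis k 1)) \<in> borel_measurable \<mu>"
        unfolding D0_def by (rule D_meas[OF mu_sets f relu_cont ind_meas])
      show "(\<lambda>y. Dr (r + 1) y (axis k 1)) \<in> borel_measurable \<mu>" for r
        unfolding Dr_def by (rule D_meas[OF mu_sets f Rcont R'meas]) simp_all
      show "integrable \<mu> (\<lambda>_. Bc * norm (axis k (1::real)))"
        by (rule finite_measure.integrable_const[OF mu_fin])
      show "AE y in \<mu>. norm (Dr (r + 1) y (axis k 1)) \<le> Bc * norm (axis k (1::real))" for r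
      proof (rule AE_I2)
        fix y assume ys: "y \<in> space \<mu>"
        have y': "\<And>k. \<bar>y $ k\<bar> \<le> Y" using ybd[of y] ys sp by simp
        have fy: "\<bar>f y\<bar> \<le> FB" using FB[of y] ys sp by simp
        have r1: "r + 1 \<ge> 1" by simp
        show "norm (Dr (r + 1) y (axis k 1)) \<le> Bc * norm (axis k (1::real))"
          using D_bound[where f=f and y=y and ep=ep and ej=ej and H=H and h="axis k 1" and act="R (r+1)" and act'="deriv (R (r+1))",
            OF Rlip[OF r1] Rbd[OF r1] R'bd[OF r1] Cc0 Ac0 y' fy M0eq]
          unfolding Dr_def Bc_def by simp
      qed
      show "AE y in \<mu>. (\<lambda>r. Dr (r + 1) y (axis k 1)) \<longlonglongrightarrow> D0 y (axis k 1)"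
      proof (rule AE_I2)
        fix y
        have l1: "(\<lambda>r. R (r + 1) x) \<longlonglongrightarrow> max x 0" for x
          using LIMSEQ_ignore_initial_segment[OF Rlim1[of x], of 1] .
        have l2: "(\<lambda>r. deriv (R (r + 1)) x) \<longlonglongrightarrow> indicator {0<..} x" for x
          using LIMSEQ_ignore_initial_segment[OF Rlim2[of x], of 1] .
        show "(\<lambda>r. Dr (r + 1) y (axis k 1)) \<longlonglongrightarrow> D0 y (axis k 1)"
          unfolding Dr_def D0_def netA_zz DN_def
          by (intro tendsto_intros l1 l2)
      qed
    qed
    then show "(\<lambda>r. g r $ k) \<longlonglongrightarrow> v $ k" by (rule LIMSEQ_offset)
  qed
  have "G \<theta> = v" using G dR' gv by blast
  then show ?thesis using dL' by simp
qed

end
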